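(* Let $X$ be a topological space. The following are equivalent: (1) $X$ is hereditarily Baire; (2) every fragmentable function $f\colon X\to\mathbb R$ has (PCP). Moreover, if $X$ is perfectly normal, (1) and (2) are equivalent to: (3) every function $f\colon X\to\mathbb R$ with the Lebesgue property has (PCP).
   Context: A topological space is Baire if every nonempty open subset of it is nonmeager in it; it is hereditarily Baire if every nonempty closed subspace is Baire. For $f\colon X\to\mathbb R$: $f$ is fragmentable if for every $\varepsilon>0$ and every nonempty closed $F\subseteq X$ there is an open $U$ with $U\cap F\neq\emptyset$ and $\operatorname{diam} f(U\cap F)<\varepsilon$; $f$ has (PCP) if for every nonempty closed $F\subseteq X$ the restriction $f|_F$ has a point of continuity; $f$ has the Lebesgue property if for every $\varepsilon>0$ there are closed sets $X_n$ ($n\in\mathbb N$) with $X=\bigcup_n X_n$ and $\operatorname{diam} f(X_n)\le\varepsilon$ for all $n$. *)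

theory Defs
  imports "HOL-Analysis.Analysis"
begin

definition nowhere_dense_in :: "'a topology \<Rightarrow> 'a set \<Rightarrow> bool" where
  "nowhere_dense_in X S \<longleftrightarrow> S \<subseteq> topspace X \<and> X interior_of (X closure_of S) = {}"

definition meager_in :: "'a topology \<Rightarrow> 'a set \<Rightarrow> bool" where
  "meager_in X S \<longleftrightarrow> (\<exists>N :: nat \<Rightarrow> 'a set. (\<forall>n. nowhere_dense_in X (N n)) \<and> S \<subseteq> (\<Union>n. N n))"

definition baire_space :: "'a topology \<Rightarrow> bool" where
  "baire_space X \<longleftrightarrow> (\<forall>U. openin X U \<and> U \<noteq> {} \<longrightarrow> \<not> meager_in X U)"

definition hereditarily_baire :: "'a topology \<Rightarrow> bool" where
  "hereditarily_baire X \<longleftrightarrow> (\<forall>F. closedin X F \<and> F \<noteq> {} \<longrightarrow> baire_space (subtopology X F))"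

text \<open>diam A < e, resp. diam A \<le> e, for a set of reals (diam of unbounded set is infinite).\<close>
definition diam_less :: "real set \<Rightarrow> real \<Rightarrow> bool" where
  "diam_less A e \<longleftrightarrow> bounded A \<and> diameter A < e"

definition diam_le :: "real set \<Rightarrow> real \<Rightarrow> bool" where
  "diam_le A e \<longleftrightarrow> bounded A \<and> diameter A \<le> e"

definition fragmentable :: "'a topology \<Rightarrow> ('a \<Rightarrow> real) \<Rightarrow> bool" where
  "fragmentable X f \<longleftrightarrow>
     (\<forall>e>0. \<forall>F. closedin X F \<and> F \<noteq> {} \<longrightarrow>
        (\<exists>U. openin X U \<and> U \<inter> F \<noteq> {} \<and> diam_less (f ` (U \<inter> F)) e))"

definition continuity_point_on :: "'a topology \<Rightarrow> 'a set \<Rightarrow> ('a \<Rightarrow> real) \<Rightarrow> 'a \<Rightarrow> bool" where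
  "continuity_point_on X F f x \<longleftrightarrow> x \<in> F \<and>
     (\<forall>e>0. \<exists>U. openin X U \<and> x \<in> U \<and> (\<forall>y\<in>U \<inter> F. \<bar>f y - f x\<bar> < e))"

definition has_PCP :: "'a topology \<Rightarrow> ('a \<Rightarrow> real) \<Rightarrow> bool" where
  "has_PCP X f \<longleftrightarrow> (\<forall>F. closedin X F \<and> F \<noteq> {} \<longrightarrow> (\<exists>x\<in>F. continuity_point_on X F f x))"

definition lebesgue_property :: "'a topology \<Rightarrow> ('a \<Rightarrow> real) \<Rightarrow> bool" where
  "lebesgue_property X f \<longleftrightarrow>
     (\<forall>e>0. \<exists>C :: nat \<Rightarrow> 'a set. (\<forall>n. closedin X (C n) \<and> diam_le (f ` C n) e) \<and>
                               topspace X = (\<Union>n. C n))"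

definition perfectly_normal :: "'a topology \<Rightarrow> bool" where
  "perfectly_normal X \<longleftrightarrow> normal_space X \<and> (\<forall>C. closedin X C \<longrightarrow> gdelta_in X C)"

end

theory Submission
  imports Defs
begin

lemma diam_less_const: "A \<subseteq> {c} \<Longrightarrow> e > 0 \<Longrightarrow> diam_less A e"
  unfolding diam_less_def
  by (cases "A = {}") (auto simp: subset_singleton_iff)

lemma diam_le_const: "A \<subseteq> {c} \<Longrightarrow> e \<ge> 0 \<Longrightarrow> diam_le A e"
  unfolding diam_le_def
  by (cases "A = {}") (auto simp: subset_singleton_iff)

lemma diam_less_interval:
  fixes A :: "real set"
  assumes "A \<subseteq> {a..b}" "b - a < e" "a \<le> b"
  shows "diam_less A e"
proof -
  have "bounded A" using assms(1) bounded_subset bounded_closed_interval by blast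
  moreover have "diameter A \<le> b - a"
  proof (rule diameter_le)
    show "A \<noteq> {} \<or> 0 \<le> b - a" using assms by simp
    fix x y assume "x \<in> A" "y \<in> A"
    then have "a \<le> x" "x \<le> b" "a \<le> y" "y \<le> b" using assms(1) by auto
    then show "norm (x - y) \<le> b - a" by simp
  qed
  ultimately show ?thesis using assms unfolding diam_less_def by simp
qed

lemma diam_less_subset: "diam_less B e \<Longrightarrow> A \<subseteq> B \<Longrightarrow> diam_less A e"
  unfolding diam_less_def
  by (meson bounded_subset diameter_subset order.strict_trans1)

lemma diam_less_bound: "diam_less A e \<Longrightarrow> x \<in> A \<Longrightarrow> y \<in> A \<Longrightarrow> \<bar>x - y\<bar> < e"
  unfolding diam_less_def
  by (metis diameter_bounded_bound dist_real_def order.strict_trans1)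

lemma lebesgue_pieces:
  fixes f :: "'a \<Rightarrow> real" and Op C :: "nat \<Rightarrow> 'a set"
  assumes pn: "perfectly_normal X"
    and Op: "\<And>i. openin X (Op i)" and C: "\<And>i. closedin X (C i)"
    and cov: "topspace X \<subseteq> (\<Union>i. Op i \<inter> C i)"
    and const: "\<And>i x y. x \<in> Op i \<inter> C i \<Longrightarrow> y \<in> Op i \<inter> C i \<Longrightarrow> f x = f y"
  shows "lebesgue_property X f"
proof -
  have "\<forall>i. \<exists>E::nat\<Rightarrow>'a set. (\<forall>n. closedin X (E n)) \<and> \<Union> (range E) = Op i"
  proof
    fix i
    have "closedin X (topspace X - Op i)" using Op[of i] by (simp add: closedin_diff)
    then have "gdelta_in X (topspace X - Op i)" using pn unfolding perfectly_normal_def by blast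
    moreover have "topspace X - (topspace X - Op i) = Op i" using openin_subset[OF Op[of i]] by blast
    ultimately have "fsigma_in X (Op i)" using openin_subset[OF Op[of i]]
      unfolding fsigma_in_gdelta_in by simp
    then have "\<exists>C. (\<forall>n. closedin X (C n)) \<and> (\<forall>n. C n \<subseteq> C(Suc n)) \<and> \<Union> (range C) = Op i"
      by (simp only: fsigma_in_ascending)
    then show "\<exists>E::nat\<Rightarrow>'a set. (\<forall>n. closedin X (E n)) \<and> \<Union> (range E) = Op i"
      by (elim exE conjE) (intro exI conjI; assumption)
  qed
  from choice[OF this] obtain E :: "nat \<Rightarrow> nat \<Rightarrow> 'a set" where E': "\<forall>i. (\<forall>n. closedin X (E i n)) \<and> \<Union> (range (E i)) = Op i"
    by (elim exE) (rule that)
  have E: "\<And>i n. closedin X (E i n)" "\<And>i. \<Union> (range (E i)) = Op i"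
    using E' by simp_all
  define D :: "nat \<Rightarrow> 'a set" where "D n = (case prod_decode n of (i, j) \<Rightarrow> E i j \<inter> C i)" for n
  show ?thesis unfolding lebesgue_property_def
  proof (intro allI impI)
    fix e :: real assume "e > 0"
    have D1: "\<forall>n. closedin X (D n) \<and> diam_le (f ` D n) e"
    proof
      fix n
      obtain i j where ij: "prod_decode n = (i, j)" by (cases "prod_decode n")
      have Dn: "D n = E i j \<inter> C i" by (simp add: D_def ij)
      have "closedin X (D n)" unfolding Dn using E(1)[of i j] C[of i] by (rule closedin_Int)
      moreover have "D n \<subseteq> Op i \<inter> C i" using Dn E(2)[of i] by blast
      then have "diam_le (f ` D n) e"
      proof (cases "D n = {}")
        case True then show ?thesis using diam_le_const[of "f ` D n" 0 e] \<open>e>0\<close> by simp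
      next
        case False
        then obtain x0 where x0: "x0 \<in> D n" by blast
        have "f ` D n \<subseteq> {f x0}"
        proof
          fix z assume "z \<in> f ` D n"
          then obtain y where "y \<in> D n" "z = f y" by blast
          then show "z \<in> {f x0}" using const[of y i x0] x0 \<open>D n \<subseteq> Op i \<inter> C i\<close> by auto
        qed
        then show ?thesis using diam_le_const \<open>e>0\<close> by auto
      qed
      ultimately show "closedin X (D n) \<and> diam_le (f ` D n) e" by blast
    qed
    have D2: "topspace X = (\<Union>n. D n)"
    proof
      show "(\<Union>n. D n) \<subseteq> topspace X" 
        using \<open>\<forall>n. closedin X (D n) \<and> diam_le (f ` D n) e\<close> closedin_subset by (intro UN_least) blast
      show "topspace X \<subseteq> (\<Union>n. D n)"
      proof
        fix x assume "x \<in> topspace X"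
        then obtain i where "x \<in> Op i" "x \<in> C i" using cov by auto
        then obtain j where "x \<in> E i j" using E(2)[of i] by auto
        then have "x \<in> D (prod_encode (i, j))" using \<open>x \<in> C i\<close> by (simp add: D_def)
        then show "x \<in> (\<Union>n. D n)" by blast
      qed
    qed
    show "\<exists>C::nat \<Rightarrow> 'a set. (\<forall>n. closedin X (C n) \<and> diam_le (f ` C n) e) \<and> topspace X = (\<Union>n. C n)"
      using D1 D2 by blast
  qed
qed

lemma small_inv: "(e::real) > 0 \<Longrightarrow> \<exists>n::nat. 1 / (real n + 1) < e"
proof -
  assume "e > 0"
  then obtain n :: nat where n: "n > 0" "inverse (real n) < e" using ex_inverse_of_nat_less by blast
  have "1 / (real n + 1) \<le> inverse (real n)" using n(1) by (simp add: divide_simps)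
  then show ?thesis using n(2) by (intro exI[of _ n]) linarith
qed

lemma hb_frag_pcp:
  fixes f :: "'a \<Rightarrow> real"
  assumes hb: "hereditarily_baire X" and fr: "fragmentable X f"
  shows "has_PCP X f"
  unfolding has_PCP_def
proof (intro allI impI)
  fix F assume F: "closedin X F \<and> F \<noteq> {}"
  define G where "G n = \<Union>{U. openin X U \<and> diam_less (f ` (U \<inter> F)) (1/(real n + 1))}" for n
  have Gopen: "openin X (G n)" for n unfolding G_def by (rule openin_Union) auto
  define D where "D n = F - G n" for n
  have Fsub: "F \<subseteq> topspace X" using F closedin_subset by blast
  have nd: "nowhere_dense_in (subtopology X F) (D n)" for n
  proof -
    have sub: "D n \<subseteq> topspace (subtopology X F)" using Fsub unfolding D_def by auto
    have "D n = (topspace X - G n) \<inter> F" using Fsub unfolding D_def by auto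
    moreover have "closedin X (topspace X - G n)" using Gopen[of n] by blast
    ultimately have cl: "closedin (subtopology X F) (D n)"
      unfolding closedin_subtopology by blast
    have "(subtopology X F) interior_of (D n) = {}"
    proof (rule ccontr)
      assume "(subtopology X F) interior_of (D n) \<noteq> {}"
      then obtain z where z: "z \<in> (subtopology X F) interior_of D n" by blast
      then obtain S where S: "openin (subtopology X F) S" "z \<in> S" "S \<subseteq> D n"
        by (auto simp: interior_of_def)
      then obtain V where V: "openin X V" "S = V \<inter> F" by (auto simp: openin_subtopology)
      define H where "H = X closure_of (V \<inter> F)"
      have VFH: "V \<inter> F \<subseteq> H" unfolding H_def using Fsub by (intro closure_of_subset) blast
      have H: "closedin X H" "H \<noteq> {}" using VFH S V unfolding H_def by auto
      have "(1::real) / (real n + 1) > 0" by simp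
      then obtain U where U: "openin X U" "U \<inter> H \<noteq> {}" "diam_less (f ` (U \<inter> H)) (1/(real n + 1))"
        using fr[unfolded fragmentable_def, rule_format, of "1/(real n + 1)" H] H by blast
      obtain w where w: "w \<in> U" "w \<in> H" using U(2) by blast
      then have "\<forall>T. w \<in> T \<and> openin X T \<longrightarrow> (\<exists>y. y \<in> V \<inter> F \<and> y \<in> T)"
        unfolding H_def in_closure_of by simp
      then obtain y where y: "y \<in> V \<inter> F" "y \<in> U" using U(1) w(1) by blast
      have "f ` ((U \<inter> V) \<inter> F) \<subseteq> f ` (U \<inter> H)" using VFH by blast
      then have "diam_less (f ` ((U \<inter> V) \<inter> F)) (1/(real n + 1))" by (rule diam_less_subset[OF U(3)])
      moreover have "openin X (U \<inter> V)" using U(1) V(1) by blast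
      ultimately have "U \<inter> V \<subseteq> G n" unfolding G_def by (intro Union_upper) simp
      then have "y \<in> G n" using y by blast
      moreover have "y \<in> D n" using y S V by blast
      ultimately show False by (simp add: D_def)
    qed
    moreover have "(subtopology X F) closure_of (D n) = D n" using cl by (simp add: closure_of_eq)
    ultimately show ?thesis unfolding nowhere_dense_in_def using sub by simp
  qed
  have "baire_space (subtopology X F)" using hb F unfolding hereditarily_baire_def by simp
  moreover have "openin (subtopology X F) F" using Fsub by (simp add: openin_subtopology_refl)
  ultimately have "\<not> meager_in (subtopology X F) F" using F unfolding baire_space_def by blast
  have "\<not> F \<subseteq> (\<Union>n. D n)"
  proof
    assume "F \<subseteq> (\<Union>n. D n)"
    then have "meager_in (subtopology X F) F" unfolding meager_in_def using nd by (intro exI[of _ D] conjI allI)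
    then show False using \<open>\<not> meager_in (subtopology X F) F\<close> by contradiction
  qed
  then obtain x where x: "x \<in> F" "\<And>n. x \<notin> D n" by blast
  then have xG: "x \<in> G n" for n unfolding D_def by blast
  have "continuity_point_on X F f x" unfolding continuity_point_on_def
  proof (intro conjI allI impI)
    show "x \<in> F" by (rule x(1))
    fix e :: real assume "e > 0"
    then obtain n :: nat where n: "1/(real n + 1) < e" using small_inv by blast
    from xG[of n] obtain U where U: "openin X U" "x \<in> U" "diam_less (f ` (U \<inter> F)) (1/(real n + 1))"
      unfolding G_def by blast
    have "\<forall>y\<in>U \<inter> F. \<bar>f y - f x\<bar> < e"
    proof
      fix y assume "y \<in> U \<inter> F"
      then have "\<bar>f y - f x\<bar> < 1/(real n + 1)" using U x(1) by (intro diam_less_bound) auto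
      then show "\<bar>f y - f x\<bar> < e" using n by linarith
    qed
    then show "\<exists>U. openin X U \<and> x \<in> U \<and> (\<forall>y\<in>U \<inter> F. \<bar>f y - f x\<bar> < e)" using U by blast
  qed
  then show "\<exists>x\<in>F. continuity_point_on X F f x" using x(1) by blast
qed

lemma hb_leb_frag:
  fixes f :: "'a \<Rightarrow> real"
  assumes hb: "hereditarily_baire X" and leb: "lebesgue_property X f"
  shows "fragmentable X f"
  unfolding fragmentable_def
proof (intro allI impI)
  fix e :: real and F assume e: "e > 0" and F: "closedin X F \<and> F \<noteq> {}"
  have Fsub: "F \<subseteq> topspace X" using F closedin_subset by blast
  obtain C :: "nat \<Rightarrow> 'a set" where C': "\<forall>n. closedin X (C n) \<and> diam_le (f ` C n) (e/2)" and C3: "topspace X = (\<Union>n. C n)"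
    using leb[unfolded lebesgue_property_def, rule_format, OF half_gt_zero[OF e]] by blast
  have C: "\<And>n. closedin X (C n)" "\<And>n. diam_le (f ` C n) (e/2)" "topspace X = (\<Union>n. C n)"
    using C' C3 by simp_all
  have "baire_space (subtopology X F)" using hb F unfolding hereditarily_baire_def by simp
  moreover have "openin (subtopology X F) F" using Fsub by (simp add: openin_subtopology_refl)
  ultimately have nm: "\<not> meager_in (subtopology X F) F" using F unfolding baire_space_def by blast
  have "\<exists>n. \<not> nowhere_dense_in (subtopology X F) (F \<inter> C n)"
  proof (rule ccontr)
    assume "\<not> (\<exists>n. \<not> nowhere_dense_in (subtopology X F) (F \<inter> C n))"
    then have "\<forall>n. nowhere_dense_in (subtopology X F) (F \<inter> C n)" by blast
    moreover have "F \<subseteq> (\<Union>n. F \<inter> C n)" using Fsub C(3) by blast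
    ultimately have "meager_in (subtopology X F) F" unfolding meager_in_def
      by (intro exI[of _ "\<lambda>n. F \<inter> C n"] conjI)
    then show False using nm by contradiction
  qed
  then obtain n where n: "\<not> nowhere_dense_in (subtopology X F) (F \<inter> C n)" by blast
  have cl: "closedin (subtopology X F) (F \<inter> C n)" using C(1) by (rule closedin_subtopology_Int_closed)
  then have "(subtopology X F) closure_of (F \<inter> C n) = F \<inter> C n" by (simp add: closure_of_eq)
  moreover have "F \<inter> C n \<subseteq> topspace (subtopology X F)" using Fsub by auto
  ultimately have "(subtopology X F) interior_of (F \<inter> C n) \<noteq> {}" using n unfolding nowhere_dense_in_def by simp
  then obtain z where "z \<in> (subtopology X F) interior_of (F \<inter> C n)" by blast
  then obtain S where S: "openin (subtopology X F) S" "z \<in> S" "S \<subseteq> F \<inter> C n"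
    by (auto simp: interior_of_def)
  then obtain V where V: "openin X V" "S = V \<inter> F" by (auto simp: openin_subtopology)
  have "diam_less (f ` C n) e" using C(2)[of n] e unfolding diam_le_def diam_less_def by simp
  moreover have "f ` (V \<inter> F) \<subseteq> f ` C n" using S V by blast
  ultimately have "diam_less (f ` (V \<inter> F)) e" by (rule diam_less_subset)
  moreover have "V \<inter> F \<noteq> {}" using S V by blast
  ultimately show "\<exists>U. openin X U \<and> U \<inter> F \<noteq> {} \<and> diam_less (f ` (U \<inter> F)) e" using V by blast
qed

lemma counterexample:
  assumes nhb: "\<not> hereditarily_baire X"
  obtains f :: "'a \<Rightarrow> real" where "fragmentable X f" "\<not> has_PCP X f"
    "perfectly_normal X \<Longrightarrow> lebesgue_property X f"
proof -
  obtain F where F: "closedin X F" "F \<noteq> {}" "\<not> baire_space (subtopology X F)"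
    using nhb unfolding hereditarily_baire_def by blast
  obtain U where U: "openin (subtopology X F) U" "U \<noteq> {}" "meager_in (subtopology X F) U"
    using F(3) unfolding baire_space_def by blast
  obtain N :: "nat \<Rightarrow> 'a set" where N: "\<And>n. nowhere_dense_in (subtopology X F) (N n)" "U \<subseteq> (\<Union>n. N n)"
    using U(3) unfolding meager_in_def by blast
  obtain W where W: "openin X W" "U = W \<inter> F" using U(1) by (auto simp: openin_subtopology)
  have Fsub: "F \<subseteq> topspace X" using F(1) by (rule closedin_subset)
  have UF: "U \<subseteq> F" using W by simp
  have Utop: "U \<subseteq> topspace X" using UF Fsub by (rule order.trans)
  define K where "K = X closure_of U"
  have Kc: "closedin X K" unfolding K_def by simp
  have UK: "U \<subseteq> K" unfolding K_def using Utop by (rule closure_of_subset)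
  have KF: "K \<subseteq> F" unfolding K_def using UF F(1) by (rule closure_of_minimal)
  have UWK: "U = W \<inter> K" using UK KF W(2) by blast
  have Ktop: "K \<subseteq> topspace X" using KF Fsub by (rule order.trans)
  have Ntop: "N n \<subseteq> F" for n
    using N(1)[of n] unfolding nowhere_dense_in_def by simp
  define Cl where "Cl j = K \<inter> X closure_of (N j)" for j
  define P where "P n = (\<Union>j\<in>{..n}. Cl j)" for n
  define Q where "Q n = (\<Union>j\<in>{..<n}. Cl j)" for n
  have Clc: "closedin X (Cl j)" for j unfolding Cl_def using Kc by (intro closedin_Int) simp_all
  have Pc: "closedin X (P n)" for n unfolding P_def
    by (intro closedin_Union) (auto simp: Clc)
  have Qc: "closedin X (Q n)" for n unfolding Q_def
    by (intro closedin_Union) (auto simp: Clc)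
  have PK: "P n \<subseteq> K" for n unfolding P_def Cl_def by blast
  have B0: "(V - X closure_of N k) \<inter> U \<noteq> {}" if V: "openin X V" "V \<inter> U \<noteq> {}" for V k
  proof
    assume emp: "(V - X closure_of N k) \<inter> U = {}"
    define S where "S = V \<inter> U"
    have So: "openin (subtopology X F) S" unfolding S_def W(2) openin_subtopology
      using V(1) W(1) by (intro exI[of _ "V \<inter> W"]) auto
    have "S \<subseteq> F \<inter> X closure_of (F \<inter> N k)"
    proof
      fix s assume "s \<in> S"
      then have "s \<in> F" "s \<in> X closure_of N k" using emp UF unfolding S_def by auto
      moreover have "F \<inter> N k = N k" using Ntop[of k] by blast
      ultimately show "s \<in> F \<inter> X closure_of (F \<inter> N k)" by simp
    qed
    then have "S \<subseteq> (subtopology X F) closure_of (N k)" by (simp add: closure_of_subtopology)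
    then have "S \<subseteq> (subtopology X F) interior_of ((subtopology X F) closure_of (N k))"
      using So by (intro interior_of_maximal)
    then have "S = {}" using N(1)[of k] unfolding nowhere_dense_in_def by simp
    then show False using V(2) unfolding S_def by simp
  qed
  have B1: "\<forall>V. openin X V \<and> V \<inter> U \<noteq> {} \<longrightarrow> (\<exists>y\<in>V \<inter> U. \<forall>j\<le>n. y \<notin> X closure_of N j)" for n
  proof (induction n)
    case 0
    show ?case
    proof (intro allI impI)
      fix V assume V: "openin X V \<and> V \<inter> U \<noteq> {}"
      then have "(V - X closure_of N 0) \<inter> U \<noteq> {}" using B0 by simp
      then obtain y where "y \<in> V" "y \<in> U" "y \<notin> X closure_of N 0" by blast
      then show "\<exists>y\<in>V \<inter> U. \<forall>j\<le>0. y \<notin> X closure_of N j" by auto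
    qed
  next
    case (Suc n)
    show ?case
    proof (intro allI impI)
      fix V assume V: "openin X V \<and> V \<inter> U \<noteq> {}"
      define V' where "V' = V - X closure_of N (Suc n)"
      have "openin X V'" unfolding V'_def using V by (intro openin_diff) simp_all
      moreover have "V' \<inter> U \<noteq> {}" unfolding V'_def using B0 V by simp
      ultimately obtain y where y: "y \<in> V' \<inter> U" "\<forall>j\<le>n. y \<notin> X closure_of N j"
        using Suc.IH by blast
      have "\<forall>j\<le>Suc n. y \<notin> X closure_of N j"
      proof (intro allI impI)
        fix j assume "j \<le> Suc n"
        then have "j \<le> n \<or> j = Suc n" by linarith
        then show "y \<notin> X closure_of N j" using y unfolding V'_def by auto
      qed
      moreover have "y \<in> V \<inter> U" using y(1) unfolding V'_def by blast
      ultimately show "\<exists>y\<in>V \<inter> U. \<forall>j\<le>Suc n. y \<notin> X closure_of N j" by blast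
    qed
  qed
  have B: "\<exists>y\<in>V \<inter> U. y \<notin> P n" if "openin X V" "V \<inter> U \<noteq> {}" for V n
  proof -
    have "\<exists>y\<in>V \<inter> U. \<forall>j\<le>n. y \<notin> X closure_of N j" using B1[of n] that by simp
    then obtain y where y: "y \<in> V \<inter> U" "\<forall>j\<le>n. y \<notin> X closure_of N j" by blast
    then have "y \<notin> P n" unfolding P_def Cl_def by simp
    then show ?thesis using y(1) by blast
  qed
  have inP: "\<exists>n. x \<in> P n" if "x \<in> U" for x
  proof -
    have "x \<in> (\<Union>n. N n)" using N(2) that by (rule subsetD)
    then obtain n where xn: "x \<in> N n" by blast
    have "N n \<subseteq> topspace X" using Ntop[of n] Fsub by (rule order.trans)
    then have "N n \<subseteq> X closure_of N n" by (rule closure_of_subset)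
    then have "x \<in> Cl n" unfolding Cl_def using xn that UK by (simp add: subset_iff)
    then have "x \<in> P n" unfolding P_def by auto
    then show ?thesis by (rule exI)
  qed
  define lev where "lev x = (LEAST n. x \<in> P n)" for x
  have levP: "x \<in> P (lev x)" if "x \<in> U" for x
    unfolding lev_def using inP[OF that] by (rule LeastI_ex)
  have lev_le: "lev x \<le> n" if "x \<in> P n" for x n
    unfolding lev_def using that by (rule Least_le)
  have Pmono: "P m \<subseteq> P n" if "m \<le> n" for m n unfolding P_def by (rule UN_mono) (use that in auto)
  have lev_gt: "n < lev x" if "x \<in> U" "x \<notin> P n" for x n
  proof (rule ccontr)
    assume "\<not> n < lev x"
    then have "lev x \<le> n" by simp
    then have "x \<in> P n" using Pmono levP[OF that(1)] by blast
    then show False using that(2) by contradiction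
  qed
  have lev_ge: "k \<le> lev x" if "x \<in> U" "x \<notin> Q k" for x k
  proof (rule ccontr)
    assume "\<not> k \<le> lev x"
    then have "lev x < k" by simp
    moreover have "x \<in> P (lev x)" using levP[OF that(1)] .
    ultimately have "x \<in> Q k" unfolding P_def Q_def by auto
    then show False using that(2) by contradiction
  qed
  have levQ: "x \<notin> Q (lev x)" if "x \<in> U" for x
  proof
    assume "x \<in> Q (lev x)"
    then obtain j where j: "j < lev x" "x \<in> Cl j" unfolding Q_def by blast
    then have "x \<in> P j" unfolding P_def by blast
    then have "lev x \<le> j" by (rule lev_le)
    then show False using j(1) by simp
  qed
  define f :: "'a \<Rightarrow> real" where
    "f x = (if x \<in> U then 1 / (real (lev x) + 2) else if x \<in> K then 1 else 0)" for x
  have fU: "0 < f x \<and> f x \<le> 1/2" if "x \<in> U" for x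
    using that unfolding f_def by (simp add: divide_simps)
  have notPCP: "\<not> has_PCP X f"
  proof
    assume pcp: "has_PCP X f"
    have "K \<noteq> {}" using UK U(2) by blast
    then obtain x where x: "x \<in> K" "continuity_point_on X K f x"
      using pcp Kc unfolding has_PCP_def by blast
    show False
    proof (cases "x \<in> U")
      case True
      define e where "e = 1 / (real (lev x) + 2) - 1 / (real (lev x) + 3)"
      have "e > 0" unfolding e_def by (simp add: divide_simps)
      then obtain V where V: "openin X V" "x \<in> V" "\<forall>y\<in>V \<inter> K. \<bar>f y - f x\<bar> < e"
        using x(2) unfolding continuity_point_on_def by blast
      have "V \<inter> U \<noteq> {}" using V(2) True by blast
      then obtain y where y: "y \<in> V \<inter> U" "y \<notin> P (lev x)" using B V(1) by blast
      have "lev x < lev y" using lev_gt y by blast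
      then have le: "real (lev x) + 3 \<le> real (lev y) + 2" by simp
      have "1 / (real (lev y) + 2) \<le> 1 / (real (lev x) + 3)"
        using le by (intro divide_left_mono) auto
      then have "f x - f y \<ge> e" using True y(1) unfolding f_def e_def by simp
      moreover have "\<bar>f y - f x\<bar> < e" using V(3) y(1) UK by blast
      ultimately show False by linarith
    next
      case False
      then have fx: "f x = 1" using x(1) unfolding f_def by simp
      have "(1::real)/2 > 0" by simp
      then obtain V where V: "openin X V" "x \<in> V" "\<forall>y\<in>V \<inter> K. \<bar>f y - f x\<bar> < 1/2"
        using x(2) unfolding continuity_point_on_def by blast
      have "\<forall>T. x \<in> T \<and> openin X T \<longrightarrow> (\<exists>y. y \<in> U \<and> y \<in> T)"
        using x(1) unfolding K_def in_closure_of by simp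
      then obtain y where y: "y \<in> U" "y \<in> V" using V(1,2) by blast
      have "\<bar>f y - f x\<bar> < 1/2" using V(3) y UK by blast
      moreover have "f y \<le> 1/2" using fU y(1) by blast
      ultimately show False using fx by linarith
    qed
  qed
  have frag: "fragmentable X f"
    unfolding fragmentable_def
  proof (intro allI impI)
    fix e :: real and H assume e: "e > 0" and H: "closedin X H \<and> H \<noteq> {}"
    have Htop: "H \<subseteq> topspace X" using H closedin_subset by blast
    show "\<exists>V. openin X V \<and> V \<inter> H \<noteq> {} \<and> diam_less (f ` (V \<inter> H)) e"
    proof (cases "H \<subseteq> K")
      case False
      define V where "V = topspace X - K"
      have "openin X V" unfolding V_def using Kc by (intro openin_diff) simp_all
      moreover have "V \<inter> H \<noteq> {}" unfolding V_def using False Htop by blast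
      moreover have "f ` (V \<inter> H) \<subseteq> {0}" unfolding V_def f_def using UK by auto
      then have "diam_less (f ` (V \<inter> H)) e" using e by (rule diam_less_const)
      ultimately show ?thesis by blast
    next
      case HK: True
      show ?thesis
      proof (cases "H \<inter> U = {}")
        case True
        have "openin X (topspace X)" by simp
        moreover have "topspace X \<inter> H \<noteq> {}" using H Htop by blast
        moreover have "f ` (topspace X \<inter> H) \<subseteq> {1}" unfolding f_def using HK True by auto
        then have "diam_less (f ` (topspace X \<inter> H)) e" using e by (rule diam_less_const)
        ultimately show ?thesis by blast
      next
        case HU: False
        obtain N0 :: nat where N0: "1 / (real N0 + 1) < e" using small_inv e by blast
        have N0': "1 / (real N0 + 2) < e"
        proof -
          have "1 / (real N0 + 2) \<le> 1 / (real N0 + 1)" by (intro divide_left_mono) auto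
          then show ?thesis using N0 by linarith
        qed
        have VHU: "V \<inter> H \<subseteq> U" if "V \<subseteq> W" for V using that HK UWK by blast
        show ?thesis
        proof (cases "\<exists>x\<in>H \<inter> U. x \<notin> P N0")
          case True
          then obtain x where x: "x \<in> H \<inter> U" "x \<notin> P N0" by blast
          define V where "V = W - P N0"
          have "openin X V" unfolding V_def using W(1) Pc by (intro openin_diff)
          moreover have "x \<in> V \<inter> H" unfolding V_def using x W(2) by blast
          moreover have "f ` (V \<inter> H) \<subseteq> {0..1 / (real N0 + 2)}"
          proof
            fix z assume "z \<in> f ` (V \<inter> H)"
            then obtain y where y: "y \<in> V \<inter> H" "z = f y" by blast
            have yU: "y \<in> U" using VHU[of V] y(1) unfolding V_def by blast
            have "y \<notin> P N0" using y(1) unfolding V_def by blast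
            then have "N0 < lev y" using lev_gt yU by blast
            then have le: "real N0 + 2 \<le> real (lev y) + 2" by simp
            have "1 / (real (lev y) + 2) \<le> 1 / (real N0 + 2)"
              using le by (intro divide_left_mono) auto
            then show "z \<in> {0..1 / (real N0 + 2)}" using yU y(2) unfolding f_def by simp
          qed
          then have "diam_less (f ` (V \<inter> H)) e"
            by (rule diam_less_interval) (use N0' in simp_all)
          ultimately show ?thesis by blast
        next
          case False
          then have levle: "lev x \<le> N0" if "x \<in> H \<inter> U" for x using that lev_le by blast
          define k where "k = Max (lev ` (H \<inter> U))"
          have fin: "finite (lev ` (H \<inter> U))"
            by (rule finite_subset[of _ "{..N0}"]) (use levle in auto)
          have "k \<in> lev ` (H \<inter> U)" unfolding k_def using fin HU by (intro Max_in) auto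
          then obtain x where x: "x \<in> H \<inter> U" "lev x = k" by blast
          have kmax: "lev y \<le> k" if "y \<in> H \<inter> U" for y
            unfolding k_def using fin that by (intro Max_ge) auto
          define V where "V = W - Q k"
          have "openin X V" unfolding V_def using W(1) Qc by (intro openin_diff)
          moreover have "x \<in> V \<inter> H" unfolding V_def using x W(2) levQ by blast
          moreover have "f ` (V \<inter> H) \<subseteq> {f x}"
          proof
            fix z assume "z \<in> f ` (V \<inter> H)"
            then obtain y where y: "y \<in> V \<inter> H" "z = f y" by blast
            have yU: "y \<in> U" using VHU[of V] y(1) unfolding V_def by blast
            have "y \<notin> Q k" using y(1) unfolding V_def by blast
            then have "k \<le> lev y" using lev_ge yU by blast
            moreover have "lev y \<le> k" using kmax yU y(1) by blast
            ultimately have "lev y = lev x" using x(2) by simp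
            then show "z \<in> {f x}" using yU x(1) y(2) unfolding f_def by simp
          qed
          then have "diam_less (f ` (V \<inter> H)) e" using e by (rule diam_less_const)
          ultimately show ?thesis by blast
        qed
      qed
    qed
  qed
  have leb: "lebesgue_property X f" if pn: "perfectly_normal X"
  proof -
    define Op :: "nat \<Rightarrow> 'a set" where
      "Op i = (if i = 0 then topspace X - K else if i = 1 then topspace X else W - Q (i - 2))" for i
    define Cc :: "nat \<Rightarrow> 'a set" where
      "Cc i = (if i = 0 then topspace X else if i = 1 then K - W else P (i - 2))" for i
    show ?thesis
    proof (rule lebesgue_pieces[OF pn, of Op Cc])
      show "openin X (Op i)" for i
        unfolding Op_def using Kc W(1) Qc by (auto intro!: openin_diff)
      show "closedin X (Cc i)" for i
        unfolding Cc_def using Kc W(1) Pc by (auto intro!: closedin_diff)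
      show "topspace X \<subseteq> (\<Union>i. Op i \<inter> Cc i)"
      proof
        fix x assume xt: "x \<in> topspace X"
        show "x \<in> (\<Union>i. Op i \<inter> Cc i)"
        proof (cases "x \<in> K")
          case False
          then have "x \<in> Op 0 \<inter> Cc 0" unfolding Op_def Cc_def using xt by simp
          then show ?thesis by blast
        next
          case True
          show ?thesis
          proof (cases "x \<in> U")
            case False
            then have "x \<notin> W" using True UWK by blast
            then have "x \<in> Op 1 \<inter> Cc 1" unfolding Op_def Cc_def using xt True by simp
            then show ?thesis by blast
          next
            case xU: True
            have "x \<in> W" using xU UWK by blast
            then have "x \<in> Op (lev x + 2) \<inter> Cc (lev x + 2)"
              unfolding Op_def Cc_def using levQ[OF xU] levP[OF xU] by simp
            then show ?thesis by blast
          qed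
        qed
      qed
      show "f x = f y" if "x \<in> Op i \<inter> Cc i" "y \<in> Op i \<inter> Cc i" for i x y
      proof -
        consider "i = 0" | "i = 1" | "i \<ge> 2" by linarith
        then show ?thesis
        proof cases
          case 1
          then have "x \<notin> K" "y \<notin> K" using that unfolding Op_def by auto
          then show ?thesis unfolding f_def using UK by auto
        next
          case 2
          then have "x \<in> K - W" "y \<in> K - W" using that unfolding Cc_def by auto
          then show ?thesis unfolding f_def using UWK by auto
        next
          case 3
          define k where "k = i - 2"
          have OC: "Op i \<inter> Cc i = (W - Q k) \<inter> P k" unfolding Op_def Cc_def k_def using 3 by simp
          have levk: "z \<in> U \<and> lev z = k" if "z \<in> (W - Q k) \<inter> P k" for z
          proof -
            have zU: "z \<in> U" using that PK UWK by blast
            have "k \<le> lev z" using lev_ge zU that by blast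
            moreover have "lev z \<le> k" using lev_le that by blast
            ultimately show ?thesis using zU by simp
          qed
          have "x \<in> U \<and> lev x = k" "y \<in> U \<and> lev y = k" using levk that OC by simp_all
          then show ?thesis unfolding f_def by simp
        qed
      qed
    qed
  qed
  show thesis using that[OF frag notPCP leb] .
qed

theorem proposition2p9:
  fixes X :: "'a topology"
  shows "(hereditarily_baire X \<longleftrightarrow> (\<forall>f. fragmentable X f \<longrightarrow> has_PCP X f))
    \<and> (perfectly_normal X \<longrightarrow>
         (hereditarily_baire X \<longleftrightarrow> (\<forall>f. lebesgue_property X f \<longrightarrow> has_PCP X f)))"
proof (intro conjI impI iffI allI)
  show "has_PCP X f" if "hereditarily_baire X" "fragmentable X f" for f
    using that by (rule hb_frag_pcp)
  show "hereditarily_baire X" if H: "\<forall>f. fragmentable X f \<longrightarrow> has_PCP X f"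
  proof (rule ccontr)
    assume "\<not> hereditarily_baire X"
    then obtain f :: "'a \<Rightarrow> real" where "fragmentable X f" "\<not> has_PCP X f"
      using counterexample[OF \<open>\<not> hereditarily_baire X\<close>] by blast
    then show False using H by blast
  qed
  show "has_PCP X f" if "hereditarily_baire X" "lebesgue_property X f" for f
    using that(1) hb_leb_frag[OF that] by (rule hb_frag_pcp)
  show "hereditarily_baire X" if pn: "perfectly_normal X" and H: "\<forall>f. lebesgue_property X f \<longrightarrow> has_PCP X f"
  proof (rule ccontr)
    assume "\<not> hereditarily_baire X"
    then obtain f :: "'a \<Rightarrow> real" where "fragmentable X f" "\<not> has_PCP X f" "perfectly_normal X \<Longrightarrow> lebesgue_property X f"
      using counterexample[OF \<open>\<not> hereditarily_baire X\<close>] by blast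
    then show False using H pn by blast
  qed
qed

end
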